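(* Let $n,m\in\mathbb{N}$ with $n\ge3$, $\sigma\in[5/n,1]$ and $\varepsilon\in[0,1/4]$. Let $A$ be a (possibly randomized) algorithm such that for every $n$-arm bandit $q$, $A$ makes $m$ (possibly adaptive) queries to the bandit oracle $\mathcal{O}_q$ and outputs a $\sigma$-smooth strategy $\pi$ that, with probability at least $2/3$, is an $\varepsilon$-optimal $\sigma$-smooth strategy for $q$. Then $m\ge n/6$.
   Context: An $n$-arm bandit is a vector $q=(q_1,\dots,q_n)$ of probability distributions on $[0,1]$; its oracle $\mathcal{O}_q$, on query $i\in[n]$, returns an independent sample from $q_i$. The expected utilities vector is $u$ with $u_i=\mathbb{E}_{x\sim q_i}[x]$. A strategy is a distribution $\pi$ on $[n]$ with expected utility $\pi\cdot u=\sum_i\pi_iu_i$; it is $\sigma$-smooth if $\pi_i\le\sigma$ for all $i$; it is an $\varepsilon$-optimal $\sigma$-smooth strategy for $q$ if it is $\sigma$-smooth and $\pi'\cdot u-\pi\cdot u\le\varepsilon$ for every $\sigma$-smooth strategy $\pi'$. *)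

theory Defs
  imports "HOL-Probability.Probability"
begin

text \<open>Arms are indexed by 0..n-1. A strategy is a probability vector on the arms
  (values at indices \<ge> n are irrelevant).\<close>

definition strategy :: "nat \<Rightarrow> (nat \<Rightarrow> real) \<Rightarrow> bool" where
  "strategy n \<pi> \<longleftrightarrow> (\<forall>i<n. 0 \<le> \<pi> i) \<and> (\<Sum>i<n. \<pi> i) = 1"

definition smooth_strategy :: "nat \<Rightarrow> real \<Rightarrow> (nat \<Rightarrow> real) \<Rightarrow> bool" where
  "smooth_strategy n \<sigma> \<pi> \<longleftrightarrow> strategy n \<pi> \<and> (\<forall>i<n. \<pi> i \<le> \<sigma>)"

definition bandit :: "nat \<Rightarrow> (nat \<Rightarrow> real measure) \<Rightarrow> bool" where
  "bandit n q \<longleftrightarrow> (\<forall>i<n. prob_space (q i) \<and> sets (q i) = sets borel \<and>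
                              (AE x in q i. x \<in> {0..1}))"

definition utility :: "(nat \<Rightarrow> real measure) \<Rightarrow> nat \<Rightarrow> real" where
  "utility q i = (\<integral>x. x \<partial>(q i))"

definition eps_optimal_smooth ::
  "nat \<Rightarrow> real \<Rightarrow> real \<Rightarrow> (nat \<Rightarrow> real measure) \<Rightarrow> (nat \<Rightarrow> real) \<Rightarrow> bool" where
  "eps_optimal_smooth n \<sigma> \<epsilon> q \<pi> \<longleftrightarrow> smooth_strategy n \<sigma> \<pi> \<and>
     (\<forall>\<pi>'. smooth_strategy n \<sigma> \<pi>' \<longrightarrow>
        (\<Sum>i<n. \<pi>' i * utility q i) - (\<Sum>i<n. \<pi> i * utility q i) \<le> \<epsilon>)"

text \<open>Randomized adaptive algorithm: a random seed \<omega> (from a probability space R);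
  at step k it queries arm Q k \<omega> h, where h is the list of answers received so far.
  The oracle is modelled by a table Y of independent samples, Y (k,i) ~ q i, and the
  answer to the k-th query (to arm i) is Y (k,i); since every step uses fresh samples,
  answers are independent samples of the queried arms.\<close>

fun answers :: "(nat \<Rightarrow> 'r \<Rightarrow> real list \<Rightarrow> nat) \<Rightarrow> 'r \<Rightarrow> (nat \<times> nat \<Rightarrow> real) \<Rightarrow> nat \<Rightarrow> real list" where
  "answers Q \<omega> Y 0 = []"
| "answers Q \<omega> Y (Suc k) = answers Q \<omega> Y k @ [Y (k, Q k \<omega> (answers Q \<omega> Y k))]"

definition outcome_space :: "'r measure \<Rightarrow> nat \<Rightarrow> nat \<Rightarrow> (nat \<Rightarrow> real measure)
    \<Rightarrow> ('r \<times> (nat \<times> nat \<Rightarrow> real)) measure" where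
  "outcome_space R n m q = R \<Otimes>\<^sub>M (PiM ({..<m} \<times> {..<n}) (\<lambda>(k,i). q i))"

end

theory Submission
  imports Defs
begin

definition goodk :: "nat \<Rightarrow> nat \<Rightarrow> real \<Rightarrow> nat \<Rightarrow> bool" where
  "goodk n m \<sigma> k \<longleftrightarrow> 1 \<le> k \<and> k < n \<and>
     3 * (\<sigma> * real m + 1) * real k < 2 * (real n - real m) * (min 1 (real k * \<sigma>) - 1/4)"

lemma small_3: assumes "5/3 \<le> \<sigma>" "\<sigma> \<le> 1" shows "\<exists>k. goodk 3 0 \<sigma> k"
proof -
  have "goodk 3 0 \<sigma> 1" using assms by (simp add: goodk_def min_def)
  then show ?thesis by blast
qed

lemma small_4: assumes "5/4 \<le> \<sigma>" "\<sigma> \<le> 1" shows "\<exists>k. goodk 4 0 \<sigma> k"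
proof -
  have "goodk 4 0 \<sigma> 1" using assms by (simp add: goodk_def min_def)
  then show ?thesis by blast
qed

lemma small_5: assumes "5/5 \<le> \<sigma>" "\<sigma> \<le> 1" shows "\<exists>k. goodk 5 0 \<sigma> k"
proof -
  have "goodk 5 0 \<sigma> 1" using assms by (simp add: goodk_def min_def)
  then show ?thesis by blast
qed

lemma small_6: assumes "5/6 \<le> \<sigma>" "\<sigma> \<le> 1" shows "\<exists>k. goodk 6 0 \<sigma> k"
proof -
  have "goodk 6 0 \<sigma> 1" using assms by (simp add: goodk_def min_def)
  then show ?thesis by blast
qed

lemma small_7: assumes "5/7 \<le> \<sigma>" "\<sigma> \<le> 1" shows "\<exists>k. goodk 7 1 \<sigma> k"
proof -
  have "goodk 7 1 \<sigma> 1" using assms by (simp add: goodk_def min_def)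
  then show ?thesis by blast
qed

lemma small_8: assumes "5/8 \<le> \<sigma>" "\<sigma> \<le> 1" shows "\<exists>k. goodk 8 1 \<sigma> k"
proof -
  have "goodk 8 1 \<sigma> 1" using assms by (simp add: goodk_def min_def)
  then show ?thesis by blast
qed

lemma small_9: assumes "5/9 \<le> \<sigma>" "\<sigma> \<le> 1" shows "\<exists>k. goodk 9 1 \<sigma> k"
proof -
  have "goodk 9 1 \<sigma> 1" using assms by (simp add: goodk_def min_def)
  then show ?thesis by blast
qed

lemma small_10: assumes "5/10 \<le> \<sigma>" "\<sigma> \<le> 1" shows "\<exists>k. goodk 10 1 \<sigma> k"
proof -
  have "goodk 10 1 \<sigma> 2" using assms by (simp add: goodk_def min_def)
  then show ?thesis by blast
qed

lemma small_11: assumes "5/11 \<le> \<sigma>" "\<sigma> \<le> 1" shows "\<exists>k. goodk 11 1 \<sigma> k"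
proof -
  have "goodk 11 1 \<sigma> 2" using assms by (simp add: goodk_def min_def)
  then show ?thesis by blast
qed

lemma small_12: assumes "5/12 \<le> \<sigma>" "\<sigma> \<le> 1" shows "\<exists>k. goodk 12 1 \<sigma> k"
proof -
  have "goodk 12 1 \<sigma> 2" using assms by (simp add: goodk_def min_def)
  then show ?thesis by blast
qed

lemma small_13: assumes "5/13 \<le> \<sigma>" "\<sigma> \<le> 1" shows "\<exists>k. goodk 13 2 \<sigma> k"
proof (cases "\<sigma> \<le> (83/95)")
  case True
  then have "goodk 13 2 \<sigma> 2" using assms by (simp add: goodk_def min_def)
  then show ?thesis by blast
next
  case False
  then have "goodk 13 2 \<sigma> 1" using assms by (simp add: goodk_def min_def)
  then show ?thesis by blast
qed

lemma small_14: assumes "5/14 \<le> \<sigma>" "\<sigma> \<le> 1" shows "\<exists>k. goodk 14 2 \<sigma> k"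
proof (cases "\<sigma> \<le> (99/100)")
  case True
  then have "goodk 14 2 \<sigma> 2" using assms by (simp add: goodk_def min_def)
  then show ?thesis by blast
next
  case False
  then have "goodk 14 2 \<sigma> 1" using assms by (simp add: goodk_def min_def)
  then show ?thesis by blast
qed

lemma small_15: assumes "5/15 \<le> \<sigma>" "\<sigma> \<le> 1" shows "\<exists>k. goodk 15 2 \<sigma> k"
proof -
  have "goodk 15 2 \<sigma> 2" using assms by (simp add: goodk_def min_def)
  then show ?thesis by blast
qed

lemma small_16: assumes "5/16 \<le> \<sigma>" "\<sigma> \<le> 1" shows "\<exists>k. goodk 16 2 \<sigma> k"
proof -
  have "goodk 16 2 \<sigma> 2" using assms by (simp add: goodk_def min_def)
  then show ?thesis by blast
qed

lemma small_17: assumes "5/17 \<le> \<sigma>" "\<sigma> \<le> 1" shows "\<exists>k. goodk 17 2 \<sigma> k"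
proof -
  have "goodk 17 2 \<sigma> 2" using assms by (simp add: goodk_def min_def)
  then show ?thesis by blast
qed

lemma small_18: assumes "5/18 \<le> \<sigma>" "\<sigma> \<le> 1" shows "\<exists>k. goodk 18 2 \<sigma> k"
proof -
  have "goodk 18 2 \<sigma> 2" using assms by (simp add: goodk_def min_def)
  then show ?thesis by blast
qed

lemma small_19: assumes "5/19 \<le> \<sigma>" "\<sigma> \<le> 1" shows "\<exists>k. goodk 19 3 \<sigma> k"
proof (cases "\<sigma> \<le> (51/92)")
  case True
  then have "goodk 19 3 \<sigma> 3" using assms by (simp add: goodk_def min_def)
  then show ?thesis by blast
next
  case False
  then have "goodk 19 3 \<sigma> 1" using assms by (simp add: goodk_def min_def)
  then show ?thesis by blast
qed

lemma small_20: assumes "5/20 \<le> \<sigma>" "\<sigma> \<le> 1" shows "\<exists>k. goodk 20 3 \<sigma> k"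
proof (cases "\<sigma> \<le> (58/95)")
  case True
  then have "goodk 20 3 \<sigma> 3" using assms by (simp add: goodk_def min_def)
  then show ?thesis by blast
next
  case False
  then have "goodk 20 3 \<sigma> 1" using assms by (simp add: goodk_def min_def)
  then show ?thesis by blast
qed

lemma small_21: assumes "5/21 \<le> \<sigma>" "\<sigma> \<le> 1" shows "\<exists>k. goodk 21 3 \<sigma> k"
proof (cases "\<sigma> \<le> (65/98)")
  case True
  then have "goodk 21 3 \<sigma> 3" using assms by (simp add: goodk_def min_def)
  then show ?thesis by blast
next
  case False
  then have "goodk 21 3 \<sigma> 1" using assms by (simp add: goodk_def min_def)
  then show ?thesis by blast
qed

lemma small_22: assumes "5/22 \<le> \<sigma>" "\<sigma> \<le> 1" shows "\<exists>k. goodk 22 3 \<sigma> k"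
proof (cases "\<sigma> \<le> (70/97)")
  case True
  then have "goodk 22 3 \<sigma> 3" using assms by (simp add: goodk_def min_def)
  then show ?thesis by blast
next
  case False
  then have "goodk 22 3 \<sigma> 1" using assms by (simp add: goodk_def min_def)
  then show ?thesis by blast
qed

lemma small_23: assumes "5/23 \<le> \<sigma>" "\<sigma> \<le> 1" shows "\<exists>k. goodk 23 3 \<sigma> k"
proof (cases "\<sigma> \<le> (73/94)")
  case True
  then have "goodk 23 3 \<sigma> 3" using assms by (simp add: goodk_def min_def)
  then show ?thesis by blast
next
  case False
  then have "goodk 23 3 \<sigma> 1" using assms by (simp add: goodk_def min_def)
  then show ?thesis by blast
qed

lemma small_24: assumes "5/24 \<le> \<sigma>" "\<sigma> \<le> 1" shows "\<exists>k. goodk 24 3 \<sigma> k"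
proof (cases "\<sigma> \<le> (79/95)")
  case True
  then have "goodk 24 3 \<sigma> 3" using assms by (simp add: goodk_def min_def)
  then show ?thesis by blast
next
  case False
  then have "goodk 24 3 \<sigma> 1" using assms by (simp add: goodk_def min_def)
  then show ?thesis by blast
qed

lemma small_25: assumes "5/25 \<le> \<sigma>" "\<sigma> \<le> 1" shows "\<exists>k. goodk 25 4 \<sigma> k"
proof (cases "\<sigma> \<le> (28/69)")
  case True
  then have "goodk 25 4 \<sigma> 4" using assms by (simp add: goodk_def min_def)
  then show ?thesis by blast
next
  case False
  then have "goodk 25 4 \<sigma> 2" using assms by (simp add: goodk_def min_def)
  then show ?thesis by blast
qed

lemma small_26: assumes "5/26 \<le> \<sigma>" "\<sigma> \<le> 1" shows "\<exists>k. goodk 26 4 \<sigma> k"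
proof (cases "\<sigma> \<le> (38/87)")
  case True
  then have "goodk 26 4 \<sigma> 4" using assms by (simp add: goodk_def min_def)
  then show ?thesis by blast
next
  case False
  then have "goodk 26 4 \<sigma> 2" using assms by (simp add: goodk_def min_def)
  then show ?thesis by blast
qed

lemma small_27: assumes "5/27 \<le> \<sigma>" "\<sigma> \<le> 1" shows "\<exists>k. goodk 27 4 \<sigma> k"
proof (cases "\<sigma> \<le> (37/79)")
  case True
  then have "goodk 27 4 \<sigma> 4" using assms by (simp add: goodk_def min_def)
  then show ?thesis by blast
next
  case False
  then have "goodk 27 4 \<sigma> 1" using assms by (simp add: goodk_def min_def)
  then show ?thesis by blast
qed

lemma small_28: assumes "5/28 \<le> \<sigma>" "\<sigma> \<le> 1" shows "\<exists>k. goodk 28 4 \<sigma> k"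
proof (cases "\<sigma> \<le> (49/99)")
  case True
  then have "goodk 28 4 \<sigma> 4" using assms by (simp add: goodk_def min_def)
  then show ?thesis by blast
next
  case False
  then have "goodk 28 4 \<sigma> 1" using assms by (simp add: goodk_def min_def)
  then show ?thesis by blast
qed

lemma small_29: assumes "5/29 \<le> \<sigma>" "\<sigma> \<le> 1" shows "\<exists>k. goodk 29 4 \<sigma> k"
proof (cases "\<sigma> \<le> (43/81)")
  case True
  then have "goodk 29 4 \<sigma> 4" using assms by (simp add: goodk_def min_def)
  then show ?thesis by blast
next
  case False
  then have "goodk 29 4 \<sigma> 1" using assms by (simp add: goodk_def min_def)
  then show ?thesis by blast
qed

lemma small_30: assumes "5/30 \<le> \<sigma>" "\<sigma> \<le> 1" shows "\<exists>k. goodk 30 4 \<sigma> k"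
proof (cases "\<sigma> \<le> (50/89)")
  case True
  then have "goodk 30 4 \<sigma> 4" using assms by (simp add: goodk_def min_def)
  then show ?thesis by blast
next
  case False
  then have "goodk 30 4 \<sigma> 1" using assms by (simp add: goodk_def min_def)
  then show ?thesis by blast
qed

lemma small_31: assumes "5/31 \<le> \<sigma>" "\<sigma> \<le> 1" shows "\<exists>k. goodk 31 5 \<sigma> k"
proof (cases "\<sigma> \<le> (31/97)")
  case True
  then have "goodk 31 5 \<sigma> 5" using assms by (simp add: goodk_def min_def)
  then show ?thesis by blast
next
  case False
  then have "goodk 31 5 \<sigma> 2" using assms by (simp add: goodk_def min_def)
  then show ?thesis by blast
qed

lemma small_all: assumes "3 \<le> n" "n < 32" "5/real n \<le> \<sigma>" "\<sigma> \<le> 1" shows "\<exists>k. goodk n ((n-1) div 6) \<sigma> k"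
proof -
  have "n = 3 \<or> n = 4 \<or> n = 5 \<or> n = 6 \<or> n = 7 \<or> n = 8 \<or> n = 9 \<or> n = 10 \<or> n = 11 \<or> n = 12 \<or> n = 13 \<or> n = 14 \<or> n = 15 \<or> n = 16 \<or> n = 17 \<or> n = 18 \<or> n = 19 \<or> n = 20 \<or> n = 21 \<or> n = 22 \<or> n = 23 \<or> n = 24 \<or> n = 25 \<or> n = 26 \<or> n = 27 \<or> n = 28 \<or> n = 29 \<or> n = 30 \<or> n = 31" using assms(1,2) by arith
  then show ?thesis
  proof (elim disjE)
    assume "n = 3" then show ?thesis using small_3 assms(3,4) by simp
  next
    assume "n = 4" then show ?thesis using small_4 assms(3,4) by simp
  next
    assume "n = 5" then show ?thesis using small_5 assms(3,4) by simp
  next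
    assume "n = 6" then show ?thesis using small_6 assms(3,4) by simp
  next
    assume "n = 7" then show ?thesis using small_7 assms(3,4) by simp
  next
    assume "n = 8" then show ?thesis using small_8 assms(3,4) by simp
  next
    assume "n = 9" then show ?thesis using small_9 assms(3,4) by simp
  next
    assume "n = 10" then show ?thesis using small_10 assms(3,4) by simp
  next
    assume "n = 11" then show ?thesis using small_11 assms(3,4) by simp
  next
    assume "n = 12" then show ?thesis using small_12 assms(3,4) by simp
  next
    assume "n = 13" then show ?thesis using small_13 assms(3,4) by simp
  next
    assume "n = 14" then show ?thesis using small_14 assms(3,4) by simp
  next
    assume "n = 15" then show ?thesis using small_15 assms(3,4) by simp
  next
    assume "n = 16" then show ?thesis using small_16 assms(3,4) by simp
  next
    assume "n = 17" then show ?thesis using small_17 assms(3,4) by simp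
  next
    assume "n = 18" then show ?thesis using small_18 assms(3,4) by simp
  next
    assume "n = 19" then show ?thesis using small_19 assms(3,4) by simp
  next
    assume "n = 20" then show ?thesis using small_20 assms(3,4) by simp
  next
    assume "n = 21" then show ?thesis using small_21 assms(3,4) by simp
  next
    assume "n = 22" then show ?thesis using small_22 assms(3,4) by simp
  next
    assume "n = 23" then show ?thesis using small_23 assms(3,4) by simp
  next
    assume "n = 24" then show ?thesis using small_24 assms(3,4) by simp
  next
    assume "n = 25" then show ?thesis using small_25 assms(3,4) by simp
  next
    assume "n = 26" then show ?thesis using small_26 assms(3,4) by simp
  next
    assume "n = 27" then show ?thesis using small_27 assms(3,4) by simp
  next
    assume "n = 28" then show ?thesis using small_28 assms(3,4) by simp
  next
    assume "n = 29" then show ?thesis using small_29 assms(3,4) by simp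
  next
    assume "n = 30" then show ?thesis using small_30 assms(3,4) by simp
  next
    assume "n = 31" then show ?thesis using small_31 assms(3,4) by simp
  qed
qed


lemma goodk_mono:
  assumes "goodk n m \<sigma> k" "m' \<le> m" "m < n" "0 \<le> \<sigma>"
  shows "goodk n m' \<sigma> k"
proof -
  let ?o = "min 1 (real k * \<sigma>) - 1/4"
  have g: "1 \<le> k" "k < n" "3 * (\<sigma> * real m + 1) * real k < 2 * (real n - real m) * ?o"
    using assms(1) by (auto simp: goodk_def)
  have "0 \<le> \<sigma> * real m" using assms(4) by simp
  then have pos: "0 < 3 * (\<sigma> * real m + 1) * real k" using g(1) by (intro mult_pos_pos) auto
  have nm: "0 < real n - real m" using assms(3) by simp
  have o: "0 < ?o"
  proof (rule ccontr)
    assume "\<not> 0 < ?o"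
    then have "2 * (real n - real m) * ?o \<le> 0" using nm by (simp add: mult_nonneg_nonpos)
    then show False using g(3) pos by linarith
  qed
  have "\<sigma> * real m' \<le> \<sigma> * real m" using assms(2,4) by (simp add: mult_left_mono)
  then have X1: "3 * (\<sigma> * real m' + 1) * real k \<le> 3 * (\<sigma> * real m + 1) * real k"
    by (intro mult_right_mono) auto
  have X2: "2 * (real n - real m) * ?o \<le> 2 * (real n - real m') * ?o"
    using o assms(2) by (intro mult_right_mono) auto
  show ?thesis using g X1 X2 unfolding goodk_def by linarith
qed

lemma large_case:
  assumes n: "32 \<le> n" and m: "6 * m < n" and s: "5 / real n \<le> \<sigma>" "\<sigma> \<le> 1"
  shows "\<exists>k. goodk n m \<sigma> k"
proof -
  have rn: "32 \<le> real n" using n by simp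
  have rm: "6 * real m \<le> real n - 1" using m by linarith
  have mge: "0 \<le> real m" by simp
  have sp: "0 < \<sigma>" using s rn by (smt (verit) divide_pos_pos)
  have ns: "5 \<le> real n * \<sigma>" using s rn by (simp add: field_simps)
  show ?thesis
  proof (cases "1/2 \<le> \<sigma>")
    case True
    have sm: "\<sigma> * real m \<le> real m" using s sp by (intro mult_left_le_one_le) auto
    have "goodk n m \<sigma> 2" unfolding goodk_def using True n sm rm by (simp add: min_def)
    then show ?thesis by blast
  next
    case False
    define k where "k = nat \<lceil>1/\<sigma>\<rceil>"
    have kc: "real k = real_of_int \<lceil>1/\<sigma>\<rceil>" unfolding k_def using sp by simp
    have k1: "1/\<sigma> \<le> real k" unfolding kc using ceiling_correct[of "1/\<sigma>"] by linarith
    have k2: "real k < 1/\<sigma> + 1" unfolding kc using ceiling_correct[of "1/\<sigma>"] by linarith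
    have inv: "1/\<sigma> \<le> real n / 5" using ns sp by (simp add: field_simps)
    have ks: "1 \<le> real k * \<sigma>" using k1 sp by (simp add: field_simps)
    have "2 < 1/\<sigma>" using False sp by (simp add: field_simps)
    then have kge: "2 < real k" using k1 by linarith
    have "(\<sigma> * real m + 1) * real k < (\<sigma> * real m + 1) * (1/\<sigma> + 1)"
    proof (rule mult_strict_left_mono[OF k2])
      have "0 \<le> \<sigma> * real m" using sp by simp
      then show "0 < \<sigma> * real m + 1" by linarith
    qed
    also have "\<dots> = real m + \<sigma> * real m + 1/\<sigma> + 1" using sp by (simp add: field_simps)
    finally have A: "(\<sigma> * real m + 1) * real k < real m + \<sigma> * real m + 1/\<sigma> + 1" .
    have B1: "\<sigma> * real m \<le> \<sigma> * (real n / 6)" using rm sp by (intro mult_left_mono) auto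
    have "0 \<le> (real n * \<sigma> - 5) * (1/2 - \<sigma>)" using ns False by (intro mult_nonneg_nonneg) auto
    then have B2: "real n * \<sigma> * \<sigma> \<le> real n * \<sigma> / 2 - 5/2 + 5 * \<sigma>" by (simp add: algebra_simps)
    have "(\<sigma> * (real n / 6) + 1/\<sigma>) * \<sigma> = real n * \<sigma> * \<sigma> / 6 + 1" using sp by (simp add: field_simps)
    also have "\<dots> \<le> (real n / 5 + 5/6) * \<sigma>" using B2 ns by (simp add: algebra_simps)
    finally have "\<sigma> * (real n / 6) + 1/\<sigma> \<le> real n / 5 + 5/6" using sp by (simp add: mult_le_cancel_right)
    with A B1 have C: "(\<sigma> * real m + 1) * real k < real m + real n / 5 + 5/6 + 1" by linarith
    have mn: "min 1 (real k * \<sigma>) = 1" using ks by simp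
    have "3 * (\<sigma> * real m + 1) * real k < 2 * (real n - real m) * (min 1 (real k * \<sigma>) - 1/4)"
    proof -
      have "3 * (\<sigma> * real m + 1) * real k = 3 * ((\<sigma> * real m + 1) * real k)" by simp
      moreover have "2 * (real n - real m) * (1 - 1/4) = 3/2*real n - 3/2*real m" by (simp add: algebra_simps)
      ultimately show ?thesis unfolding mn using C rm rn by linarith
    qed
    moreover have "k < n" using k2 inv rn by linarith
    moreover have "1 \<le> k" using kge by linarith
    ultimately have "goodk n m \<sigma> k" unfolding goodk_def by blast
    then show ?thesis by blast
  qed
qed

lemma exists_k:
  assumes "3 \<le> n" "6 * m < n" "5 / real n \<le> \<sigma>" "\<sigma> \<le> 1"
  shows "\<exists>k. goodk n m \<sigma> k"
proof (cases "n < 32")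
  case True
  then obtain k where k: "goodk n ((n-1) div 6) \<sigma> k" using small_all assms by blast
  have "0 \<le> \<sigma>" using assms by (smt (verit) divide_nonneg_nonneg of_nat_0_le_iff)
  then have "goodk n m \<sigma> k" using goodk_mono[OF k] assms by auto
  then show ?thesis by blast
next
  case False then show ?thesis using large_case assms by auto
qed


fun runh :: "(real list \<Rightarrow> nat) \<Rightarrow> (nat \<Rightarrow> real) \<Rightarrow> nat \<Rightarrow> real list \<Rightarrow> real list" where
  "runh A v 0 h = h"
| "runh A v (Suc j) h = runh A v j (h @ [v (A h)])"

definition mix :: "nat set \<Rightarrow> nat set \<Rightarrow> (nat \<Rightarrow> real) \<Rightarrow> nat \<Rightarrow> real" where
  "mix U S w i = (if i \<in> U then (if i \<in> S then 1 else 0) else w i)"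

lemma card_contain:
  assumes "finite U" "i \<in> U"
  shows "card {S. (S \<subseteq> U \<and> card S = Suc k) \<and> i \<in> S} = (card U - 1) choose k"
proof -
  have eq: "{S. (S \<subseteq> U \<and> card S = Suc k) \<and> i \<in> S} = insert i ` {T. T \<subseteq> U - {i} \<and> card T = k}"
  proof
    show "{S. (S \<subseteq> U \<and> card S = Suc k) \<and> i \<in> S} \<subseteq> insert i ` {T. T \<subseteq> U - {i} \<and> card T = k}"
    proof
      fix S assume S: "S \<in> {S. (S \<subseteq> U \<and> card S = Suc k) \<and> i \<in> S}"
      then have "finite S" using assms(1) finite_subset by auto
      then have "card (S - {i}) = k" using S by (simp add: card_Diff_singleton)
      moreover have "S = insert i (S - {i})" using S by auto
      ultimately show "S \<in> insert i ` {T. T \<subseteq> U - {i} \<and> card T = k}" using S by blast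
    qed
  next
    show "insert i ` {T. T \<subseteq> U - {i} \<and> card T = k} \<subseteq> {S. (S \<subseteq> U \<and> card S = Suc k) \<and> i \<in> S}"
    proof
      fix S assume "S \<in> insert i ` {T. T \<subseteq> U - {i} \<and> card T = k}"
      then obtain T where T: "T \<subseteq> U - {i}" "card T = k" "S = insert i T" by blast
      then have "finite T" using assms(1) finite_subset by blast
      moreover have "i \<notin> T" using T by auto
      ultimately show "S \<in> {S. (S \<subseteq> U \<and> card S = Suc k) \<and> i \<in> S}" using T assms by auto
    qed
  qed
  have inj: "inj_on (insert i) {T. T \<subseteq> U - {i} \<and> card T = k}"
    by (rule inj_onI) (metis Diff_insert_absorb Diff_iff insertI1 mem_Collect_eq subsetD)
  show ?thesis unfolding eq card_image[OF inj] using assms by (simp add: n_subsets)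
qed

lemma double_count:
  assumes "finite U"
  shows "(\<Sum>S\<in>{S. S \<subseteq> U \<and> card S = Suc k}. \<Sum>i\<in>S. f i) = real ((card U - 1) choose k) * (\<Sum>i\<in>U. f i)"
proof -
  let ?F = "{S. S \<subseteq> U \<and> card S = Suc k}"
  have fF: "finite ?F" using assms by simp
  have "(\<Sum>S\<in>?F. \<Sum>i\<in>S. f i) = (\<Sum>S\<in>?F. \<Sum>i\<in>U. if i \<in> S then f i else 0)"
  proof (rule sum.cong[OF refl])
    fix S assume "S \<in> ?F"
    then have "U \<inter> S = S" by auto
    then show "(\<Sum>i\<in>S. f i) = (\<Sum>i\<in>U. if i \<in> S then f i else 0)"
      using sum.inter_restrict[OF assms, of f S] by simp
  qed
  also have "\<dots> = (\<Sum>i\<in>U. \<Sum>S\<in>?F. if i \<in> S then f i else 0)" by (rule sum.swap)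
  also have "\<dots> = (\<Sum>i\<in>U. real ((card U - 1) choose k) * f i)"
  proof (rule sum.cong[OF refl])
    fix i assume i: "i \<in> U"
    have "(\<Sum>S\<in>?F. if i \<in> S then f i else 0) = (\<Sum>S\<in>?F \<inter> {S. i \<in> S}. f i)"
      using sum.inter_restrict[OF fF, of "\<lambda>_. f i" "{S. i \<in> S}"] by simp
    also have "?F \<inter> {S. i \<in> S} = {S. (S \<subseteq> U \<and> card S = Suc k) \<and> i \<in> S}" by auto
    finally show "(\<Sum>S\<in>?F. if i \<in> S then f i else 0) = real ((card U - 1) choose k) * f i"
      using card_contain[OF assms i, of k] by simp
  qed
  also have "\<dots> = real ((card U - 1) choose k) * (\<Sum>i\<in>U. f i)" by (simp add: sum_distrib_left)
  finally show ?thesis .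
qed

lemma split_subsets:
  assumes "finite U" "a \<in> U"
  shows "(\<Sum>S\<in>{S. S \<subseteq> U \<and> card S = Suc k}. g S) =
         (\<Sum>S\<in>{S. S \<subseteq> U - {a} \<and> card S = Suc k}. g S) + (\<Sum>T\<in>{T. T \<subseteq> U - {a} \<and> card T = k}. g (insert a T))"
proof -
  let ?A = "{S. S \<subseteq> U - {a} \<and> card S = Suc k}"
  let ?B = "{T. T \<subseteq> U - {a} \<and> card T = k}"
  have eq: "{S. S \<subseteq> U \<and> card S = Suc k} = ?A \<union> insert a ` ?B"
  proof
    show "{S. S \<subseteq> U \<and> card S = Suc k} \<subseteq> ?A \<union> insert a ` ?B"
    proof
      fix S assume S: "S \<in> {S. S \<subseteq> U \<and> card S = Suc k}"
      then have fS: "finite S" using assms(1) finite_subset by auto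
      show "S \<in> ?A \<union> insert a ` ?B"
      proof (cases "a \<in> S")
        case True
        then have "card (S - {a}) = k" "S = insert a (S - {a})" using S fS by (auto simp: card_Diff_singleton)
        then show ?thesis using S by blast
      next
        case False then show ?thesis using S by auto
      qed
    qed
  next
    show "?A \<union> insert a ` ?B \<subseteq> {S. S \<subseteq> U \<and> card S = Suc k}"
    proof
      fix S assume "S \<in> ?A \<union> insert a ` ?B"
      then show "S \<in> {S. S \<subseteq> U \<and> card S = Suc k}"
      proof
        assume "S \<in> ?A" then show ?thesis by auto
      next
        assume "S \<in> insert a ` ?B"
        then obtain T where T: "T \<subseteq> U - {a}" "card T = k" "S = insert a T" by blast
        then have "finite T" using assms(1) finite_subset by blast
        moreover have "a \<notin> T" using T by auto
        ultimately show ?thesis using T assms by auto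
      qed
    qed
  qed
  have inj: "inj_on (insert a) ?B"
    by (rule inj_onI) (metis Diff_insert_absorb Diff_iff insertI1 mem_Collect_eq subsetD)
  have disj: "?A \<inter> insert a ` ?B = {}" by auto
  have "(\<Sum>S\<in>?A \<union> insert a ` ?B. g S) = (\<Sum>S\<in>?A. g S) + (\<Sum>S\<in>insert a ` ?B. g S)"
    using assms(1) disj by (intro sum.union_disjoint) auto
  also have "(\<Sum>S\<in>insert a ` ?B. g S) = (\<Sum>T\<in>?B. g (insert a T))"
    using sum.reindex[OF inj] by simp
  finally show ?thesis unfolding eq .
qed



lemma core_k0:
  assumes "finite U"
  shows "(\<Sum>S\<in>{S. S \<subseteq> U \<and> card S = 0}. g S) = g {}"
proof -
  have "{S. S \<subseteq> U \<and> card S = 0} = {{}}" using assms by (auto dest: finite_subset)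
  then show ?thesis by simp
qed

lemma core:
  fixes A :: "real list \<Rightarrow> nat" and P :: "real list \<Rightarrow> nat \<Rightarrow> real" and \<sigma> :: real
  assumes sig: "0 \<le> \<sigma>"
  shows "finite U \<Longrightarrow> j < card U \<Longrightarrow> (\<forall>h. \<forall>i\<in>U. 0 \<le> P h i \<and> P h i \<le> \<sigma>) \<Longrightarrow> (\<forall>h. sum (P h) U \<le> 1) \<Longrightarrow>
    (\<Sum>S\<in>{S. S \<subseteq> U \<and> card S = k}. \<Sum>i\<in>S. P (runh A (mix U S w) j h) i)
      \<le> real (card U choose k) * real k * (\<sigma> * real j + 1) / real (card U - j)"
proof (induction j arbitrary: U w h k)
  case 0
  show ?case
  proof (cases k)
    case 0 then show ?thesis by (simp add: core_k0[OF "0.prems"(1)])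
  next
    case (Suc k')
    obtain N' where N: "card U = Suc N'" using "0.prems"(2) by (cases "card U") auto
    have "(\<Sum>S\<in>{S. S \<subseteq> U \<and> card S = k}. \<Sum>i\<in>S. P (runh A (mix U S w) 0 h) i)
        = real (N' choose k') * (\<Sum>i\<in>U. P h i)"
      using double_count[OF "0.prems"(1), where k=k' and f="P h"] Suc N by simp
    also have "\<dots> \<le> real (N' choose k')"
      using "0.prems"(4) by (simp add: mult_left_le)
    also have "\<dots> = real (card U choose k) * real k * (\<sigma> * real 0 + 1) / real (card U - 0)"
    proof -
      have "real (Suc N') * real (N' choose k') = real (Suc N' choose Suc k') * real (Suc k')"
        using Suc_times_binomial_eq[of N' k'] by (metis of_nat_mult)
      then show ?thesis using N Suc by (simp add: field_simps)
    qed
    finally show ?thesis .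
  qed
next
  case (Suc j)
  note fin = Suc.prems(1) and jU = Suc.prems(2) and Pb = Suc.prems(3) and Ps = Suc.prems(4)
  let ?a = "A h"
  show ?case
  proof (cases "?a \<in> U")
    case False
    have "(\<Sum>S\<in>{S. S \<subseteq> U \<and> card S = k}. \<Sum>i\<in>S. P (runh A (mix U S w) (Suc j) h) i)
        = (\<Sum>S\<in>{S. S \<subseteq> U \<and> card S = k}. \<Sum>i\<in>S. P (runh A (mix U S w) j (h @ [w ?a])) i)"
      using False by (intro sum.cong refl) (simp add: mix_def)
    also have "\<dots> \<le> real (card U choose k) * real k * (\<sigma> * real j + 1) / real (card U - j)"
      using Suc.IH[OF fin _ Pb Ps] jU by simp
    also have "\<dots> \<le> real (card U choose k) * real k * (\<sigma> * real (Suc j) + 1) / real (card U - Suc j)"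
    proof (rule frac_le)
      show "0 \<le> real (card U choose k) * real k * (\<sigma> * real (Suc j) + 1)" using sig by simp
      show "real (card U choose k) * real k * (\<sigma> * real j + 1) \<le> real (card U choose k) * real k * (\<sigma> * real (Suc j) + 1)"
        using sig by (intro mult_left_mono) (auto simp: mult_left_mono)
      show "0 < real (card U - Suc j)" using jU by simp
      show "real (card U - Suc j) \<le> real (card U - j)" by simp
    qed
    finally show ?thesis .
  next
    case True
    note aU = True
    show ?thesis
    proof (cases k)
      case 0 then show ?thesis by (simp add: core_k0[OF fin])
    next
      case (Suc k')
      let ?U' = "U - {?a}"
      have fin': "finite ?U'" using fin by simp
      have cU': "card ?U' = card U - 1" using aU fin by simp
      have jU': "j < card ?U'" using cU' jU by simp
      have Pb': "\<forall>h. \<forall>i\<in>?U'. 0 \<le> P h i \<and> P h i \<le> \<sigma>" using Pb by auto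
      have Ps': "\<forall>h. sum (P h) ?U' \<le> 1"
      proof
        fix h'
        have "sum (P h') ?U' \<le> sum (P h') U" using Pb fin by (intro sum_mono2) auto
        then show "sum (P h') ?U' \<le> 1" using Ps by (meson order_trans)
      qed
      define g where "g S = (\<Sum>i\<in>S. P (runh A (mix U S w) (Suc j) h) i)" for S
      have sp: "(\<Sum>S\<in>{S. S \<subseteq> U \<and> card S = k}. g S) =
         (\<Sum>S\<in>{S. S \<subseteq> ?U' \<and> card S = Suc k'}. g S) + (\<Sum>T\<in>{T. T \<subseteq> ?U' \<and> card T = k'}. g (insert ?a T))"
        unfolding Suc by (rule split_subsets[OF fin aU])
      have S1: "(\<Sum>S\<in>{S. S \<subseteq> ?U' \<and> card S = Suc k'}. g S)
          = (\<Sum>S\<in>{S. S \<subseteq> ?U' \<and> card S = Suc k'}. \<Sum>i\<in>S. P (runh A (mix ?U' S (w(?a := 0))) j (h @ [0])) i)"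
      proof (intro sum.cong refl)
        fix S assume S: "S \<in> {S. S \<subseteq> ?U' \<and> card S = Suc k'}"
        then have "mix U S w = mix ?U' S (w(?a := 0))" using aU by (auto simp: mix_def fun_eq_iff)
        moreover have "mix U S w ?a = 0" using S aU by (auto simp: mix_def)
        ultimately show "g S = (\<Sum>i\<in>S. P (runh A (mix ?U' S (w(?a := 0))) j (h @ [0])) i)"
          unfolding g_def by simp
      qed
      have S2: "(\<Sum>T\<in>{T. T \<subseteq> ?U' \<and> card T = k'}. g (insert ?a T))
          = (\<Sum>T\<in>{T. T \<subseteq> ?U' \<and> card T = k'}. P (runh A (mix ?U' T (w(?a := 1))) j (h @ [1])) ?a
               + (\<Sum>i\<in>T. P (runh A (mix ?U' T (w(?a := 1))) j (h @ [1])) i))"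
      proof (intro sum.cong refl)
        fix T assume T: "T \<in> {T. T \<subseteq> ?U' \<and> card T = k'}"
        then have "mix U (insert ?a T) w = mix ?U' T (w(?a := 1))" using aU by (auto simp: mix_def fun_eq_iff)
        moreover have "mix U (insert ?a T) w ?a = 1" using aU by (auto simp: mix_def)
        moreover have "finite T" "?a \<notin> T" using T fin' finite_subset by auto
        ultimately show "g (insert ?a T) = P (runh A (mix ?U' T (w(?a := 1))) j (h @ [1])) ?a
               + (\<Sum>i\<in>T. P (runh A (mix ?U' T (w(?a := 1))) j (h @ [1])) i)"
          unfolding g_def by simp
      qed
      define N where "N = card U"
      define D where "D = real (card U - Suc j)"
      define X where "X = \<sigma> * real j + 1"
      define c1 where "c1 = real ((N - 1) choose Suc k')"
      define c2 where "c2 = real ((N - 1) choose k')"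
      have Dpos: "0 < D" using jU unfolding D_def by simp
      have DN: "D \<le> real N" unfolding D_def N_def by simp
      have DU': "real (card ?U' - j) = D" unfolding D_def using cU' by simp
      have X0: "0 \<le> X" unfolding X_def using sig by simp
      have c20: "0 \<le> c2" unfolding c2_def by simp
      have B1': "(\<Sum>S\<in>{S. S \<subseteq> ?U' \<and> card S = Suc k'}. \<Sum>i\<in>S. P (runh A (mix ?U' S (w(?a := 0))) j (h @ [0])) i)
          \<le> real (card ?U' choose Suc k') * real (Suc k') * (\<sigma> * real j + 1) / real (card ?U' - j)"
        by (rule Suc.IH[OF fin' jU' Pb' Ps'])
      have B1: "(\<Sum>S\<in>{S. S \<subseteq> ?U' \<and> card S = Suc k'}. g S) \<le> c1 * real (Suc k') * X / D"
        using B1'[unfolded DU', unfolded cU'] unfolding S1 c1_def N_def X_def .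
      have B2': "(\<Sum>T\<in>{T. T \<subseteq> ?U' \<and> card T = k'}. \<Sum>i\<in>T. P (runh A (mix ?U' T (w(?a := 1))) j (h @ [1])) i)
          \<le> real (card ?U' choose k') * real k' * (\<sigma> * real j + 1) / real (card ?U' - j)"
        by (rule Suc.IH[OF fin' jU' Pb' Ps'])
      have "(\<Sum>T\<in>{T. T \<subseteq> ?U' \<and> card T = k'}. g (insert ?a T))
          = (\<Sum>T\<in>{T. T \<subseteq> ?U' \<and> card T = k'}. P (runh A (mix ?U' T (w(?a := 1))) j (h @ [1])) ?a)
            + (\<Sum>T\<in>{T. T \<subseteq> ?U' \<and> card T = k'}. \<Sum>i\<in>T. P (runh A (mix ?U' T (w(?a := 1))) j (h @ [1])) i)"
        unfolding S2 by (simp add: sum.distrib)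
      also have "\<dots> \<le> c2 * \<sigma> + c2 * real k' * X / D"
      proof (rule add_mono)
        have "(\<Sum>T\<in>{T. T \<subseteq> ?U' \<and> card T = k'}. P (runh A (mix ?U' T (w(?a := 1))) j (h @ [1])) ?a)
            \<le> (\<Sum>T\<in>{T. T \<subseteq> ?U' \<and> card T = k'}. \<sigma>)"
          using Pb aU by (intro sum_mono) auto
        also have "\<dots> = c2 * \<sigma>" using fin' n_subsets[OF fin', of k'] unfolding c2_def N_def cU' by simp
        finally show "(\<Sum>T\<in>{T. T \<subseteq> ?U' \<and> card T = k'}. P (runh A (mix ?U' T (w(?a := 1))) j (h @ [1])) ?a) \<le> c2 * \<sigma>" .
        show "(\<Sum>T\<in>{T. T \<subseteq> ?U' \<and> card T = k'}. \<Sum>i\<in>T. P (runh A (mix ?U' T (w(?a := 1))) j (h @ [1])) i) \<le> c2 * real k' * X / D"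
          using B2'[unfolded DU', unfolded cU'] unfolding c2_def N_def X_def .
      qed
      finally have B2: "(\<Sum>T\<in>{T. T \<subseteq> ?U' \<and> card T = k'}. g (insert ?a T)) \<le> c2 * \<sigma> + c2 * real k' * X / D" .
      obtain N' where N': "N = Suc N'" using jU unfolding N_def by (cases "card U") auto
      have binom: "real (N choose Suc k') = c1 + c2" unfolding c1_def c2_def N' by simp
      have binom2: "real (Suc k') * (c1 + c2) = real N * c2"
      proof -
        have "real (Suc N') * real (N' choose k') = real (Suc N' choose Suc k') * real (Suc k')"
          using Suc_times_binomial_eq[of N' k'] by (metis of_nat_mult)
        then show ?thesis using binom unfolding c2_def N' by (simp add: algebra_simps)
      qed
      have key: "c1 * real (Suc k') * X + c2 * \<sigma> * D + c2 * real k' * X \<le> (c1 + c2) * real (Suc k') * (X + \<sigma>)"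
      proof -
        have e1: "(c1 + c2) * real (Suc k') * (X + \<sigma>) = c1 * real (Suc k') * X + c2 * real k' * X + c2 * X + real N * c2 * \<sigma>"
        proof -
          have "(c1 + c2) * real (Suc k') * (X + \<sigma>) = (c1 + c2) * real (Suc k') * X + (real (Suc k') * (c1 + c2)) * \<sigma>"
            by (simp add: algebra_simps)
          also have "\<dots> = (c1 + c2) * real (Suc k') * X + real N * c2 * \<sigma>" unfolding binom2 ..
          finally show ?thesis by (simp add: algebra_simps)
        qed
        have "c2 * \<sigma> * D \<le> c2 * \<sigma> * real N" using DN c20 sig by (intro mult_left_mono) auto
        moreover have "0 \<le> c2 * X" using c20 X0 by simp
        ultimately show ?thesis unfolding e1 by (simp add: algebra_simps)
      qed
      have "c1 * real (Suc k') * X / D + (c2 * \<sigma> + c2 * real k' * X / D)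
           = (c1 * real (Suc k') * X + c2 * \<sigma> * D + c2 * real k' * X) / D"
        using Dpos by (simp add: field_simps)
      also have "\<dots> \<le> (c1 + c2) * real (Suc k') * (X + \<sigma>) / D"
        using key Dpos by (simp add: divide_right_mono)
      finally have fin_ineq: "c1 * real (Suc k') * X / D + (c2 * \<sigma> + c2 * real k' * X / D) \<le> (c1 + c2) * real (Suc k') * (X + \<sigma>) / D" .
      have "(\<Sum>S\<in>{S. S \<subseteq> U \<and> card S = k}. \<Sum>i\<in>S. P (runh A (mix U S w) (Suc j) h) i)
           = (\<Sum>S\<in>{S. S \<subseteq> U \<and> card S = k}. g S)" unfolding g_def by simp
      also have "\<dots> \<le> c1 * real (Suc k') * X / D + (c2 * \<sigma> + c2 * real k' * X / D)"
        unfolding sp using B1 B2 by (rule add_mono)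
      also have "\<dots> \<le> (c1 + c2) * real (Suc k') * (X + \<sigma>) / D" by (rule fin_ineq)
      also have "\<dots> = real (card U choose k) * real k * (\<sigma> * real (Suc j) + 1) / real (card U - Suc j)"
        unfolding binom[symmetric] N_def D_def X_def Suc by (simp add: algebra_simps)
      finally show ?thesis .
    qed
  qed
qed



lemma length_answers[simp]: "length (answers Q \<omega> Y k) = k"
  by (induction k) auto

lemma answers_runh:
  "runh (\<lambda>h. Q (length h) \<omega> h) v j (answers Q \<omega> (\<lambda>p. v (snd p)) k) = answers Q \<omega> (\<lambda>p. v (snd p)) (k + j)"
proof (induction j arbitrary: k)
  case 0 then show ?case by simp
next
  case (Suc j k)
  have "runh (\<lambda>h. Q (length h) \<omega> h) v (Suc j) (answers Q \<omega> (\<lambda>p. v (snd p)) k)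
      = runh (\<lambda>h. Q (length h) \<omega> h) v j (answers Q \<omega> (\<lambda>p. v (snd p)) (Suc k))" by simp
  also have "\<dots> = answers Q \<omega> (\<lambda>p. v (snd p)) (Suc k + j)" by (rule Suc.IH)
  finally show ?case by simp
qed

lemma answers_cong:
  assumes "\<forall>k \<omega> h. Q k \<omega> h < n" "\<forall>k'<j. \<forall>i<n. Y (k', i) = Y' (k', i)"
  shows "answers Q \<omega> Y j = answers Q \<omega> Y' j"
  using assms(2)
proof (induction j)
  case 0 then show ?case by simp
next
  case (Suc j)
  then have "answers Q \<omega> Y j = answers Q \<omega> Y' j" by simp
  then show ?case using Suc.prems assms(1) by simp
qed

lemma measure_pair_return:
  assumes "prob_space R" "y \<in> space N" "X \<in> sets (R \<Otimes>\<^sub>M return N y)"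
  shows "{\<omega> \<in> space R. (\<omega>, y) \<in> X} \<in> sets R \<and>
         measure (R \<Otimes>\<^sub>M return N y) X = measure R {\<omega> \<in> space R. (\<omega>, y) \<in> X}"
proof -
  interpret P: prob_space "return N y" by (rule prob_space_return[OF assms(2)])
  have mp: "(\<lambda>\<omega>. (\<omega>, y)) \<in> measurable R (R \<Otimes>\<^sub>M return N y)"
    using assms(2) by (intro measurable_Pair measurable_ident_sets measurable_const) auto
  have eqs: "{\<omega> \<in> space R. (\<omega>, y) \<in> X} = (\<lambda>\<omega>. (\<omega>, y)) -` X \<inter> space R" by auto
  have ms: "{\<omega> \<in> space R. (\<omega>, y) \<in> X} \<in> sets R"
    unfolding eqs using measurable_sets[OF mp assms(3)] .
  have "emeasure (R \<Otimes>\<^sub>M return N y) X = (\<integral>\<^sup>+\<omega>. emeasure (return N y) (Pair \<omega> -` X) \<partial>R)"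
    by (rule P.emeasure_pair_measure_alt[OF assms(3)])
  also have "\<dots> = (\<integral>\<^sup>+\<omega>. indicator {\<omega> \<in> space R. (\<omega>, y) \<in> X} \<omega> \<partial>R)"
  proof (rule nn_integral_cong)
    fix \<omega> assume "\<omega> \<in> space R"
    have "Pair \<omega> -` X \<in> sets (return N y)" using sets_Pair1[OF assms(3)] .
    then have "emeasure (return N y) (Pair \<omega> -` X) = indicator (Pair \<omega> -` X) y" by simp
    then show "emeasure (return N y) (Pair \<omega> -` X) = indicator {\<omega> \<in> space R. (\<omega>, y) \<in> X} \<omega>"
      using \<open>\<omega> \<in> space R\<close> by (simp add: indicator_def)
  qed
  also have "\<dots> = emeasure R {\<omega> \<in> space R. (\<omega>, y) \<in> X}" using ms by simp
  finally show ?thesis using ms by (simp add: measure_def)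
qed

lemma sum_measure_le:
  assumes "prob_space M" "finite F" "\<And>S. S \<in> F \<Longrightarrow> B S \<in> sets M"
    "\<And>\<omega>. \<omega> \<in> space M \<Longrightarrow> (\<Sum>S\<in>F. indicator (B S) \<omega>) \<le> (c::real)"
  shows "(\<Sum>S\<in>F. measure M (B S)) \<le> c"
proof -
  interpret prob_space M by fact
  have int: "integrable M (indicator (B S) :: _ \<Rightarrow> real)" if "S \<in> F" for S
    using assms(3)[OF that] by (simp add: integrable_indicator_iff Int_absorb2 sets.sets_into_space less_top[symmetric])
  have "(\<Sum>S\<in>F. measure M (B S)) = (\<Sum>S\<in>F. integral\<^sup>L M (indicator (B S)))"
    using assms(3) by (intro sum.cong refl) (simp add: Int_absorb2 sets.sets_into_space)
  also have "\<dots> = integral\<^sup>L M (\<lambda>\<omega>. \<Sum>S\<in>F. indicator (B S) \<omega>)"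
    using Bochner_Integration.integral_sum[where I=F and M=M and f="\<lambda>S. indicator (B S) :: _ \<Rightarrow> real"] int by simp
  also have "\<dots> \<le> c"
    using int assms(4) by (intro integral_le_const) (auto intro!: AE_I2)
  finally show ?thesis .
qed

lemma succ_bound:
  fixes \<pi> :: "nat \<Rightarrow> real"
  assumes S: "S \<subseteq> {..<n}" "card S = k" and k: "1 \<le> k" "k < n" and s: "1 \<le> real n * \<sigma>"
    and opt: "eps_optimal_smooth n \<sigma> \<epsilon> (\<lambda>i. return borel (mix {..<n} S (\<lambda>_. 0) i)) \<pi>"
  shows "min 1 (real k * \<sigma>) - \<epsilon> \<le> (\<Sum>i\<in>S. \<pi> i)"
proof -
  let ?q = "\<lambda>i. return borel (mix {..<n} S (\<lambda>_. 0) i)"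
  have fS: "finite S" using S finite_subset by blast
  have ut: "utility ?q i = mix {..<n} S (\<lambda>_. 0) i" for i
    unfolding utility_def by (rule integral_return) auto
  have su: "(\<Sum>i<n. f i * utility ?q i) = (\<Sum>i\<in>S. f i)" for f :: "nat \<Rightarrow> real"
  proof -
    have "(\<Sum>i<n. f i * utility ?q i) = (\<Sum>i<n. if i \<in> S then f i else 0)"
      unfolding ut by (intro sum.cong refl) (auto simp: mix_def)
    also have "\<dots> = (\<Sum>i\<in>{..<n} \<inter> S. f i)" by (simp add: sum.inter_restrict)
    also have "{..<n} \<inter> S = S" using S by auto
    finally show ?thesis .
  qed
  have sp: "0 < \<sigma>" using s by (smt (verit) mult_nonneg_nonpos of_nat_0_le_iff)
  define c where "c = min (1 / real k) \<sigma>"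
  define d where "d = (1 - real k * c) / (real n - real k)"
  define \<pi>' where "\<pi>' i = (if i \<in> S then c else d)" for i
  have kpos: "0 < real k" using k by simp
  have nk: "0 < real n - real k" using k by simp
  have c0: "0 \<le> c" unfolding c_def using sp kpos by simp
  have kc: "real k * c \<le> 1" unfolding c_def using kpos by (simp add: min_def field_simps)
  have kcm: "real k * c = min 1 (real k * \<sigma>)" unfolding c_def using kpos
    by (simp add: min_def field_simps)
  have d0: "0 \<le> d" unfolding d_def using kc nk by simp
  have ds: "d \<le> \<sigma>"
  proof (cases "1 \<le> real k * \<sigma>")
    case True
    then have "c = 1 / real k" unfolding c_def using kpos by (simp add: min_def field_simps)
    then have "d = 0" unfolding d_def using kpos by simp
    then show ?thesis using sp by simp
  next
    case False
    then have "c = \<sigma>" unfolding c_def using kpos by (simp add: min_def field_simps)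
    then have "d = (1 - real k * \<sigma>) / (real n - real k)" unfolding d_def by simp
    also have "\<dots> \<le> \<sigma>" using nk s by (simp add: field_simps)
    finally show ?thesis .
  qed
  have sum': "(\<Sum>i<n. \<pi>' i) = 1"
  proof -
    have "(\<Sum>i<n. \<pi>' i) = (\<Sum>i\<in>S. \<pi>' i) + (\<Sum>i\<in>{..<n} - S. \<pi>' i)"
      using S by (metis finite_lessThan sum.subset_diff add.commute)
    also have "\<dots> = real k * c + real (n - k) * d"
      using S fS by (simp add: \<pi>'_def card_Diff_subset)
    also have "\<dots> = 1" unfolding d_def using nk k by (simp add: field_simps)
    finally show ?thesis .
  qed
  have sm: "smooth_strategy n \<sigma> \<pi>'"
    unfolding smooth_strategy_def strategy_def using sum' c0 d0 ds
    by (auto simp: \<pi>'_def c_def)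
  have "(\<Sum>i<n. \<pi>' i * utility ?q i) - (\<Sum>i<n. \<pi> i * utility ?q i) \<le> \<epsilon>"
    using opt sm unfolding eps_optimal_smooth_def by blast
  then have "(\<Sum>i\<in>S. \<pi>' i) - (\<Sum>i\<in>S. \<pi> i) \<le> \<epsilon>" unfolding su .
  moreover have "(\<Sum>i\<in>S. \<pi>' i) = min 1 (real k * \<sigma>)" using S kcm by (simp add: \<pi>'_def)
  ultimately show ?thesis by simp
qed



theorem mainTheorem9:
  fixes n m :: nat and \<sigma> \<epsilon> :: real
    and R :: "'r measure"
    and Q :: "nat \<Rightarrow> 'r \<Rightarrow> real list \<Rightarrow> nat"
    and Out :: "'r \<Rightarrow> real list \<Rightarrow> nat \<Rightarrow> real"
  assumes "n \<ge> 3"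
    and "5 / real n \<le> \<sigma>" and "\<sigma> \<le> 1"
    and "0 \<le> \<epsilon>" and "\<epsilon> \<le> 1/4"
    and "prob_space R"
    and "\<forall>k \<omega> h. Q k \<omega> h < n"
    and "\<forall>\<omega> h. smooth_strategy n \<sigma> (Out \<omega> h)"
    and "\<forall>q. bandit n q \<longrightarrow>
           measure (outcome_space R n m q)
             {z \<in> space (outcome_space R n m q).
                eps_optimal_smooth n \<sigma> \<epsilon> q (Out (fst z) (answers Q (fst z) (snd z) m))}
           \<ge> 2/3"
  shows "real m \<ge> real n / 6"
proof (rule ccontr)
  assume neg: "\<not> real m \<ge> real n / 6"
  have "real (6 * m) < real n" using neg by simp
  then have m6: "6 * m < n" by (simp only: of_nat_less_iff)
  have mn: "m < n" using m6 by simp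
  obtain k where gk: "goodk n m \<sigma> k" using exists_k[OF assms(1) m6 assms(2,3)] by blast
  have k1: "1 \<le> k" and kn: "k < n"
    and gi: "3 * (\<sigma> * real m + 1) * real k < 2 * (real n - real m) * (min 1 (real k * \<sigma>) - 1/4)"
    using gk unfolding goodk_def by auto
  have rn: "3 \<le> real n" using assms(1) by simp
  have ns: "5 \<le> real n * \<sigma>" using assms(2) rn by (simp add: field_simps)
  have sp: "0 < \<sigma>" using ns rn by (smt (verit) mult_nonneg_nonpos of_nat_0_le_iff)
  define opt where "opt = min 1 (real k * \<sigma>)"
  define F where "F = {S. S \<subseteq> {..<n} \<and> card S = k}"
  define v where "v S = mix {..<n} S (\<lambda>_. 0)" for S
  define q where "q S = (\<lambda>i. return borel (v S i))" for S
  define I where "I = {..<m} \<times> {..<n}"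
  define Nn where "Nn = PiM I (\<lambda>_. borel :: real measure)"
  define y where "y S = restrict (\<lambda>p. v S (snd p)) I" for S
  define Bs where "Bs S = {\<omega> \<in> space R. eps_optimal_smooth n \<sigma> \<epsilon> (q S) (Out \<omega> (answers Q \<omega> (\<lambda>p. v S (snd p)) m))}" for S
  have v01: "v S i \<in> {0..1}" for S i by (simp add: v_def mix_def)
  have band: "bandit n (q S)" for S
    unfolding bandit_def q_def using v01 by (auto simp: prob_space_return AE_return)
  have os: "outcome_space R n m (q S) = R \<Otimes>\<^sub>M return Nn (y S)" for S
  proof -
    have e1: "(\<lambda>(k,i). q S i) = (\<lambda>p. return ((\<lambda>_. borel) p) ((\<lambda>p. v S (snd p)) p))"
      by (simp add: fun_eq_iff split_beta q_def)
    have e2: "PiM I (\<lambda>p. return ((\<lambda>_. borel) p) ((\<lambda>p. v S (snd p)) p)) = return Nn (y S)"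
      unfolding Nn_def y_def by (rule PiM_return) (auto simp: I_def)
    have "outcome_space R n m (q S) = R \<Otimes>\<^sub>M PiM I (\<lambda>(k,i). q S i)"
      unfolding outcome_space_def I_def ..
    also have "\<dots> = R \<Otimes>\<^sub>M return Nn (y S)" unfolding e1 e2 ..
    finally show ?thesis .
  qed
  have yspace: "y S \<in> space Nn" for S
    unfolding Nn_def y_def by (simp add: space_PiM)
  have meas: "Bs S \<in> sets R \<and> 2/3 \<le> measure R (Bs S)" if "S \<in> F" for S
  proof -
    let ?X = "{z \<in> space (outcome_space R n m (q S)).
                eps_optimal_smooth n \<sigma> \<epsilon> (q S) (Out (fst z) (answers Q (fst z) (snd z) m))}"
    have h: "2/3 \<le> measure (outcome_space R n m (q S)) ?X" using assms(9) band by blast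
    have Xs: "?X \<in> sets (outcome_space R n m (q S))"
    proof (rule ccontr)
      assume "?X \<notin> sets (outcome_space R n m (q S))"
      then have "measure (outcome_space R n m (q S)) ?X = 0" by (rule measure_notin_sets)
      then show False using h by simp
    qed
    have mp: "{\<omega> \<in> space R. (\<omega>, y S) \<in> ?X} \<in> sets R \<and>
         measure (R \<Otimes>\<^sub>M return Nn (y S)) ?X = measure R {\<omega> \<in> space R. (\<omega>, y S) \<in> ?X}"
    proof -
      have se: "sets (outcome_space R n m (q S)) = sets (R \<Otimes>\<^sub>M return Nn (y S))" by (simp only: os)
      show ?thesis using measure_pair_return[OF assms(6) yspace, of ?X] Xs unfolding se by blast
    qed
    have me: "measure (outcome_space R n m (q S)) = measure (R \<Otimes>\<^sub>M return Nn (y S))" by (simp only: os)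
    have eqB: "{\<omega> \<in> space R. (\<omega>, y S) \<in> ?X} = Bs S"
    proof -
      have ans: "answers Q \<omega> (y S) m = answers Q \<omega> (\<lambda>p. v S (snd p)) m" for \<omega>
        using assms(7) by (intro answers_cong[where n=n]) (auto simp: y_def I_def)
      show ?thesis unfolding Bs_def os using yspace
        by (auto simp: space_pair_measure ans)
    qed
    show ?thesis using mp h unfolding eqB me by simp
  qed
  have finF: "finite F" unfolding F_def by simp
  have cardF: "card F = n choose k" unfolding F_def using n_subsets[of "{..<n}" k] by simp
  have Cpos: "0 < real (n choose k)" using kn by simp
  have opt_pos: "0 < opt - 1/4"
  proof (rule ccontr)
    assume "\<not> 0 < opt - 1/4"
    then have "2 * (real n - real m) * (opt - 1/4) \<le> 0" using mn by (simp add: mult_nonneg_nonpos)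
    moreover have "0 \<le> \<sigma> * real m" using sp by simp
    then have "0 < 3 * (\<sigma> * real m + 1) * real k" using k1 by (intro mult_pos_pos) auto
    ultimately show False using gi unfolding opt_def by linarith
  qed
  have oe: "0 < opt - \<epsilon>" using opt_pos assms(5) by linarith
  define T where "T = real (n choose k) * real k * (\<sigma> * real m + 1) / real (n - m)"
  have count: "(\<Sum>S\<in>F. indicator (Bs S) \<omega>) \<le> T / (opt - \<epsilon>)" if \<omega>: "\<omega> \<in> space R" for \<omega>
  proof -
    define A where "A h = Q (length h) \<omega> h" for h
    define P where "P = Out \<omega>"
    have sm: "smooth_strategy n \<sigma> (P h)" for h using assms(8) unfolding P_def by blast
    have Pb: "\<forall>h. \<forall>i\<in>{..<n}. 0 \<le> P h i \<and> P h i \<le> \<sigma>"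
      using sm unfolding smooth_strategy_def strategy_def by auto
    have Ps: "\<forall>h. sum (P h) {..<n} \<le> 1"
      using sm unfolding smooth_strategy_def strategy_def by auto
    have run: "runh A (v S) m [] = answers Q \<omega> (\<lambda>p. v S (snd p)) m" for S
      using answers_runh[of Q \<omega> "v S" m 0] unfolding A_def by simp
    have core': "(\<Sum>S\<in>F. \<Sum>i\<in>S. P (runh A (mix {..<n} S (\<lambda>_. 0)) m []) i) \<le> T"
      using core[OF less_imp_le[OF sp], where U="{..<n}" and j=m and P=P and A=A and k=k and w="\<lambda>_. 0" and h="[]"] mn Pb Ps
      unfolding F_def T_def by simp
    have each: "indicator (Bs S) \<omega> * (opt - \<epsilon>) \<le> (\<Sum>i\<in>S. P (runh A (mix {..<n} S (\<lambda>_. 0)) m []) i)"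
      if S: "S \<in> F" for S
    proof (cases "\<omega> \<in> Bs S")
      case True
      then have eo0: "eps_optimal_smooth n \<sigma> \<epsilon> (\<lambda>i. return borel (v S i)) (P (runh A (v S) m []))"
        by (simp add: Bs_def q_def P_def run)
      have eo: "eps_optimal_smooth n \<sigma> \<epsilon> (\<lambda>i. return borel (mix {..<n} S (\<lambda>_. 0) i)) (P (runh A (v S) m []))"
        using eo0 unfolding v_def .
      have "opt - \<epsilon> \<le> (\<Sum>i\<in>S. P (runh A (v S) m []) i)"
        unfolding opt_def using S ns by (intro succ_bound[OF _ _ k1 kn _ eo]) (auto simp: F_def)
      then show ?thesis using True unfolding v_def by simp
    next
      case False
      have "S \<subseteq> {..<n}" using S unfolding F_def by simp
      then have "0 \<le> (\<Sum>i\<in>S. P (runh A (mix {..<n} S (\<lambda>_. 0)) m []) i)"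
        using Pb by (intro sum_nonneg) auto
      then show ?thesis using False by simp
    qed
    have "(\<Sum>S\<in>F. indicator (Bs S) \<omega>) * (opt - \<epsilon>) = (\<Sum>S\<in>F. indicator (Bs S) \<omega> * (opt - \<epsilon>))"
      by (simp add: sum_distrib_right)
    also have "\<dots> \<le> (\<Sum>S\<in>F. \<Sum>i\<in>S. P (runh A (mix {..<n} S (\<lambda>_. 0)) m []) i)"
      using each by (intro sum_mono) auto
    also have "\<dots> \<le> T" by (rule core')
    finally show ?thesis using oe by (simp add: pos_le_divide_eq)
  qed
  have up: "(\<Sum>S\<in>F. measure R (Bs S)) \<le> T / (opt - \<epsilon>)"
    using sum_measure_le[OF assms(6) finF, of Bs] meas count by blast
  have low: "real (n choose k) * (2/3) \<le> (\<Sum>S\<in>F. measure R (Bs S))"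
  proof -
    have "(\<Sum>S\<in>F. (2/3::real)) \<le> (\<Sum>S\<in>F. measure R (Bs S))"
      using meas by (intro sum_mono) auto
    then show ?thesis using cardF by simp
  qed
  have "T / (opt - \<epsilon>) < real (n choose k) * (2/3)"
  proof -
    have nm: "0 < real (n - m)" using mn by simp
    have rnm: "real (n - m) = real n - real m" using mn by simp
    have "3 * ((\<sigma> * real m + 1) * real k) < 2 * real (n - m) * (opt - 1/4)"
    proof -
      have "3 * ((\<sigma> * real m + 1) * real k) = 3 * (\<sigma> * real m + 1) * real k" by (simp only: mult.assoc)
      then show ?thesis using gi unfolding rnm opt_def by (simp only: mult.assoc)
    qed
    also have "\<dots> \<le> 2 * real (n - m) * (opt - \<epsilon>)"
      using nm assms(5) by (intro mult_left_mono) auto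
    finally have g2: "(\<sigma> * real m + 1) * real k < (2/3) * (real (n - m) * (opt - \<epsilon>))" by simp
    have "real (n choose k) * ((\<sigma> * real m + 1) * real k) < real (n choose k) * ((2/3) * (real (n - m) * (opt - \<epsilon>)))"
      using g2 Cpos by (rule mult_strict_left_mono)
    then have ii: "real (n choose k) * ((\<sigma> * real m + 1) * real k) < real (n choose k) * (2/3) * (real (n - m) * (opt - \<epsilon>))"
      by (simp only: mult.assoc)
    have dpos: "0 < real (n - m) * (opt - \<epsilon>)" using nm oe by simp
    have "T / (opt - \<epsilon>) = (real (n choose k) * ((\<sigma> * real m + 1) * real k)) / (real (n - m) * (opt - \<epsilon>))"
      unfolding T_def by (simp add: divide_divide_eq_left mult.assoc)
    also have "\<dots> < real (n choose k) * (2/3)"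
      using ii dpos by (simp only: pos_divide_less_eq)
    finally show ?thesis .
  qed
  then show False using up low by linarith
qed

end
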